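(* Let $(V,\mathcal{E})$ be an arbitrary hypergraph with node set $V=\{v_1,\dots,v_N\}$ and hyperedges $\mathcal{E}=\{e_1,\dots,e_M\}$, $e_i\subset V$. Consider the SIS epidemic on it, i.e. the continuous-time Markov chain on $\{S,I\}^N$ with recovery rate $\gamma>0$, per-contact infection rate $\tau>0$, and nonlinearity $f(x)=x$ for $0\le x\le c$, $f(x)=c$ for $x>c$ (with $c>0$ a parameter), as described in the context. Let $X_\sigma(t)$ be the probability that the chain is in state $\sigma$ at time $t$ (these satisfy the Kolmogorov forward/master equations of the chain), and define $$[I](t)=\sum_{\sigma\in\{S,I\}^N} |\sigma|_I\, X_\sigma(t),\qquad [S](t)=\sum_{\sigma} (N-|\sigma|_I)\, X_\sigma(t),\qquad [SI](t)=\sum_{\sigma} N^f_{SI}(\sigma)\, X_\sigma(t),$$ where $|\sigma|_I$ is the number of infected nodes in $\sigma$ and $N^f_{SI}(\sigma)=\sum_{l:\ \sigma(l)=S}\ \sum_{h\in\mathcal{E}:\ v_l\in h} f\big(N_h(\sigma)\big)$. Then $$\dot{[S]}=\gamma[I]-\tau[SI],\qquad \dot{[I]}=\tau[SI]-\gamma[I].$$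
   Context: States are $\sigma\in\{S,I\}^N$, where $\sigma(l)$ is the state (susceptible $S$ or infected $I$) of node $v_l$. For a hyperedge $h$, $N_h(\sigma)$ denotes the number of infected nodes of $h$ in state $\sigma$. Transitions of the Markov chain: an infected node $v_l$ becomes susceptible (all other nodes unchanged) at rate $\gamma$; a susceptible node $v_l$ becomes infected (all other nodes unchanged) at rate $\tau\sum_{h\in\mathcal{E}:\,v_l\in h} f(N_h(\sigma))$, where $\sigma$ is the current state. No other transitions occur. *)

theory Defs
  imports "HOL-Analysis.Analysis"
begin

text \<open>Nodes are the elements of a finite type 'v (so V = UNIV, N = CARD('v)).
  A state sigma :: 'v => bool assigns True to infected and False to susceptible nodes.\<close>

definition f_sat :: "real \<Rightarrow> real \<Rightarrow> real" where
  "f_sat c x = (if x \<le> c then x else c)"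

definition N_inf :: "'v set \<Rightarrow> ('v \<Rightarrow> bool) \<Rightarrow> nat" where
  "N_inf h \<sigma> = card {v \<in> h. \<sigma> v}"

definition sis_rate :: "real \<Rightarrow> real \<Rightarrow> (real \<Rightarrow> real) \<Rightarrow> 'v set set
    \<Rightarrow> ('v::finite \<Rightarrow> bool) \<Rightarrow> ('v \<Rightarrow> bool) \<Rightarrow> real" where
  "sis_rate gam tau f E \<sigma> \<sigma>' =
     (\<Sum>l\<in>UNIV. if \<sigma>' = \<sigma>(l := \<not> \<sigma> l)
                 then (if \<sigma> l then gam
                       else tau * (\<Sum>h\<in>{h \<in> E. l \<in> h}. f (real (N_inf h \<sigma>))))
                 else 0)"

definition num_inf :: "('v::finite \<Rightarrow> bool) \<Rightarrow> nat" where
  "num_inf \<sigma> = card {l. \<sigma> l}"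

definition N_SI :: "(real \<Rightarrow> real) \<Rightarrow> 'v set set \<Rightarrow> ('v::finite \<Rightarrow> bool) \<Rightarrow> real" where
  "N_SI f E \<sigma> = (\<Sum>l\<in>{l. \<not> \<sigma> l}. \<Sum>h\<in>{h \<in> E. l \<in> h}. f (real (N_inf h \<sigma>)))"

end

theory Submission
  imports Defs
begin

definition rl :: "real \<Rightarrow> real \<Rightarrow> (real \<Rightarrow> real) \<Rightarrow> 'v set set
    \<Rightarrow> ('v::finite \<Rightarrow> bool) \<Rightarrow> 'v \<Rightarrow> real" where
  "rl gam tau f E \<rho> l = (if \<rho> l then gam
                       else tau * (\<Sum>h\<in>{h \<in> E. l \<in> h}. f (real (N_inf h \<rho>))))"

lemma rate_self: "sis_rate gam tau f E \<sigma> \<sigma> = 0"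
  unfolding sis_rate_def
  by (rule sum.neutral) (auto simp: fun_eq_iff)

lemma rate_sum:
  fixes \<rho> :: "'v::finite \<Rightarrow> bool"
  shows "(\<Sum>\<sigma>\<in>UNIV. sis_rate gam tau f E \<rho> \<sigma> * h \<sigma>)
        = (\<Sum>l\<in>UNIV. rl gam tau f E \<rho> l * h (\<rho>(l := \<not> \<rho> l)))"
proof -
  have "(\<Sum>\<sigma>\<in>UNIV. sis_rate gam tau f E \<rho> \<sigma> * h \<sigma>)
     = (\<Sum>\<sigma>\<in>UNIV. \<Sum>l\<in>UNIV. (if \<sigma> = \<rho>(l := \<not> \<rho> l) then rl gam tau f E \<rho> l * h \<sigma> else 0))"
    unfolding sis_rate_def rl_def sum_distrib_right
    by (intro sum.cong refl) auto
  also have "\<dots> = (\<Sum>l\<in>UNIV. \<Sum>\<sigma>\<in>UNIV. (if \<sigma> = \<rho>(l := \<not> \<rho> l) then rl gam tau f E \<rho> l * h \<sigma> else 0))"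
    by (rule sum.swap)
  also have "\<dots> = (\<Sum>l\<in>UNIV. rl gam tau f E \<rho> l * h (\<rho>(l := \<not> \<rho> l)))"
    by (simp add: sum.delta')
  finally show ?thesis .
qed

lemma gen_deriv:
  fixes X :: "('v::finite \<Rightarrow> bool) \<Rightarrow> real \<Rightarrow> real" and g :: "('v \<Rightarrow> bool) \<Rightarrow> real"
  assumes master: "\<And>\<sigma>. ((\<lambda>s. X \<sigma> s) has_real_derivative
          ((\<Sum>\<sigma>'\<in>UNIV - {\<sigma>}. X \<sigma>' t * sis_rate gam tau f E \<sigma>' \<sigma>)
           - X \<sigma> t * (\<Sum>\<sigma>'\<in>UNIV - {\<sigma>}. sis_rate gam tau f E \<sigma> \<sigma>'))) (at t within S)"
  shows "((\<lambda>s. \<Sum>\<sigma>\<in>UNIV. g \<sigma> * X \<sigma> s) has_real_derivative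
     (\<Sum>\<rho>\<in>UNIV. X \<rho> t * (\<Sum>l\<in>UNIV. rl gam tau f E \<rho> l * (g (\<rho>(l := \<not> \<rho> l)) - g \<rho>)))) (at t within S)"
proof -
  let ?Q = "sis_rate gam tau f E"
  have rem: "\<And>\<sigma> (k::('v\<Rightarrow>bool) \<Rightarrow> real). (\<Sum>\<sigma>'\<in>UNIV - {\<sigma>}. k \<sigma>') = (\<Sum>\<sigma>'\<in>UNIV. k \<sigma>') - k \<sigma>"
    by (simp add: sum_diff1)
  have d: "((\<lambda>s. \<Sum>\<sigma>\<in>UNIV. g \<sigma> * X \<sigma> s) has_real_derivative
     (\<Sum>\<sigma>\<in>UNIV. g \<sigma> * ((\<Sum>\<sigma>'\<in>UNIV. X \<sigma>' t * ?Q \<sigma>' \<sigma>) - X \<sigma> t * (\<Sum>\<sigma>'\<in>UNIV. ?Q \<sigma> \<sigma>')))) (at t within S)"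
  proof (rule DERIV_sum)
    fix \<sigma>
    have "((\<lambda>s. X \<sigma> s) has_real_derivative
          ((\<Sum>\<sigma>'\<in>UNIV. X \<sigma>' t * ?Q \<sigma>' \<sigma>) - X \<sigma> t * (\<Sum>\<sigma>'\<in>UNIV. ?Q \<sigma> \<sigma>'))) (at t within S)"
      using master[of \<sigma>] by (simp add: rem rate_self)
    then show "((\<lambda>s. g \<sigma> * X \<sigma> s) has_real_derivative
          g \<sigma> * ((\<Sum>\<sigma>'\<in>UNIV. X \<sigma>' t * ?Q \<sigma>' \<sigma>) - X \<sigma> t * (\<Sum>\<sigma>'\<in>UNIV. ?Q \<sigma> \<sigma>'))) (at t within S)"
      by (rule DERIV_cmult)
  qed
  have "(\<Sum>\<sigma>\<in>UNIV. g \<sigma> * ((\<Sum>\<sigma>'\<in>UNIV. X \<sigma>' t * ?Q \<sigma>' \<sigma>) - X \<sigma> t * (\<Sum>\<sigma>'\<in>UNIV. ?Q \<sigma> \<sigma>')))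
     = (\<Sum>\<sigma>\<in>UNIV. \<Sum>\<sigma>'\<in>UNIV. X \<sigma>' t * (?Q \<sigma>' \<sigma> * g \<sigma>)) - (\<Sum>\<sigma>\<in>UNIV. X \<sigma> t * (g \<sigma> * (\<Sum>\<sigma>'\<in>UNIV. ?Q \<sigma> \<sigma>' * 1)))"
    by (simp add: sum_subtractf sum_distrib_left algebra_simps)
  also have "\<dots> = (\<Sum>\<rho>\<in>UNIV. X \<rho> t * (\<Sum>\<sigma>\<in>UNIV. ?Q \<rho> \<sigma> * g \<sigma>)) - (\<Sum>\<sigma>\<in>UNIV. X \<sigma> t * (g \<sigma> * (\<Sum>\<sigma>'\<in>UNIV. ?Q \<sigma> \<sigma>' * 1)))"
    by (subst sum.swap) (simp add: sum_distrib_left)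
  also have "\<dots> = (\<Sum>\<rho>\<in>UNIV. X \<rho> t * (\<Sum>l\<in>UNIV. rl gam tau f E \<rho> l * (g (\<rho>(l := \<not> \<rho> l)) - g \<rho>)))"
    unfolding rate_sum
    by (simp add: sum_subtractf[symmetric] sum_distrib_left algebra_simps)
  finally show ?thesis using d by simp
qed

lemma num_inf_flip:
  fixes \<rho> :: "'v::finite \<Rightarrow> bool"
  shows "real (num_inf (\<rho>(l := \<not> \<rho> l))) - real (num_inf \<rho>) = (if \<rho> l then -1 else 1)"
proof (cases "\<rho> l")
  case True
  have "{x. (\<rho>(l := \<not> \<rho> l)) x} = {x. \<rho> x} - {l}" using True by auto
  moreover have "card ({x. \<rho> x} - {l}) = card {x. \<rho> x} - 1" using True by (simp add: card_Diff_singleton)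
  ultimately have c: "card {x. (\<rho>(l := \<not> \<rho> l)) x} = card {x. \<rho> x} - 1" by simp
  moreover have "card {x. \<rho> x} \<ge> 1" using True
    by (metis One_nat_def Suc_leI card_gt_0_iff empty_iff finite mem_Collect_eq)
  ultimately show ?thesis using True unfolding num_inf_def by (simp only: of_nat_diff) simp
next
  case False
  have "{x. (\<rho>(l := \<not> \<rho> l)) x} = insert l {x. \<rho> x}" using False by auto
  moreover have "card (insert l {x. \<rho> x}) = Suc (card {x. \<rho> x})" using False by simp
  ultimately have c: "card {x. (\<rho>(l := \<not> \<rho> l)) x} = Suc (card {x. \<rho> x})" by simp
  have "num_inf (\<rho>(l := \<not> \<rho> l)) = Suc (num_inf \<rho>)" unfolding num_inf_def by (rule c)
  then show ?thesis using False by simp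
qed

lemma inner_I:
  fixes \<rho> :: "'v::finite \<Rightarrow> bool"
  shows "(\<Sum>l\<in>UNIV. rl gam tau f E \<rho> l * (real (num_inf (\<rho>(l := \<not> \<rho> l))) - real (num_inf \<rho>)))
       = tau * N_SI f E \<rho> - gam * real (num_inf \<rho>)"
proof -
  have "(\<Sum>l\<in>UNIV. rl gam tau f E \<rho> l * (real (num_inf (\<rho>(l := \<not> \<rho> l))) - real (num_inf \<rho>)))
     = (\<Sum>l\<in>UNIV. if \<rho> l then - gam else tau * (\<Sum>h\<in>{h \<in> E. l \<in> h}. f (real (N_inf h \<rho>))))"
    by (intro sum.cong refl) (simp add: num_inf_flip rl_def)
  also have "\<dots> = (\<Sum>l\<in>{x. \<rho> x}. - gam) + (\<Sum>l\<in>{l. \<not> \<rho> l}. tau * (\<Sum>h\<in>{h \<in> E. l \<in> h}. f (real (N_inf h \<rho>))))"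
    by (subst sum.If_cases) (auto intro!: arg_cong2[where f="(+)"] sum.cong)
  also have "\<dots> = tau * N_SI f E \<rho> - gam * real (num_inf \<rho>)"
    unfolding N_SI_def num_inf_def by (simp add: sum_distrib_left)
  finally show ?thesis .
qed

theorem theorem1:
  fixes E :: "('v::finite) set set"
    and gam tau c :: real
    and X :: "('v \<Rightarrow> bool) \<Rightarrow> real \<Rightarrow> real"
  assumes "gam > 0" and "tau > 0" and "c > 0"
    and prob_nonneg: "\<And>\<sigma> t. t \<ge> 0 \<Longrightarrow> X \<sigma> t \<ge> 0"
    and prob_sum: "\<And>t. t \<ge> 0 \<Longrightarrow> (\<Sum>\<sigma>\<in>UNIV. X \<sigma> t) = 1"
    and master: "\<And>\<sigma> t. t \<ge> 0 \<Longrightarrow>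
       ((\<lambda>s. X \<sigma> s) has_real_derivative
          ((\<Sum>\<sigma>'\<in>UNIV - {\<sigma>}. X \<sigma>' t * sis_rate gam tau (f_sat c) E \<sigma>' \<sigma>)
           - X \<sigma> t * (\<Sum>\<sigma>'\<in>UNIV - {\<sigma>}. sis_rate gam tau (f_sat c) E \<sigma> \<sigma>')))
        (at t within {0..})"
  shows "\<And>t. t \<ge> 0 \<Longrightarrow>
      let Sm = (\<lambda>s. \<Sum>\<sigma>\<in>UNIV. real (CARD('v) - num_inf \<sigma>) * X \<sigma> s);
          Im = (\<lambda>s. \<Sum>\<sigma>\<in>UNIV. real (num_inf \<sigma>) * X \<sigma> s);
          SIm = (\<lambda>s. \<Sum>\<sigma>\<in>UNIV. N_SI (f_sat c) E \<sigma> * X \<sigma> s)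
      in (Sm has_real_derivative (gam * Im t - tau * SIm t)) (at t within {0..})
       \<and> (Im has_real_derivative (tau * SIm t - gam * Im t)) (at t within {0..})"
proof -
  fix t :: real assume t: "t \<ge> 0"
  let ?f = "f_sat c"
  have le: "\<And>\<sigma>::'v\<Rightarrow>bool. num_inf \<sigma> \<le> CARD('v)"
    unfolding num_inf_def by (rule card_mono) auto
  have dI: "((\<lambda>s. \<Sum>\<sigma>\<in>UNIV. real (num_inf \<sigma>) * X \<sigma> s) has_real_derivative
     (\<Sum>\<rho>\<in>UNIV. X \<rho> t * (tau * N_SI ?f E \<rho> - gam * real (num_inf \<rho>)))) (at t within {0..})"
    using gen_deriv[where g="\<lambda>\<sigma>. real (num_inf \<sigma>)", OF master[OF t]] by (simp add: inner_I)
  have eqS: "\<And>\<rho>::'v\<Rightarrow>bool. \<And>l. real (CARD('v) - num_inf (\<rho>(l := \<not> \<rho> l))) - real (CARD('v) - num_inf \<rho>)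
      = - (real (num_inf (\<rho>(l := \<not> \<rho> l))) - real (num_inf \<rho>))"
    using le by (simp add: of_nat_diff)
  have inS: "(\<Sum>l\<in>UNIV. rl gam tau ?f E \<rho> l * (real (CARD('v) - num_inf (\<rho>(l := \<not> \<rho> l))) - real (CARD('v) - num_inf \<rho>)))
      = - (tau * N_SI ?f E \<rho> - gam * real (num_inf \<rho>))" for \<rho>
  proof -
    have "(\<Sum>l\<in>UNIV. rl gam tau ?f E \<rho> l * (real (CARD('v) - num_inf (\<rho>(l := \<not> \<rho> l))) - real (CARD('v) - num_inf \<rho>)))
       = (\<Sum>l\<in>UNIV. rl gam tau ?f E \<rho> l * (- (real (num_inf (\<rho>(l := \<not> \<rho> l))) - real (num_inf \<rho>))))"
      by (intro sum.cong refl) (simp only: eqS)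
    also have "\<dots> = - (\<Sum>l\<in>UNIV. rl gam tau ?f E \<rho> l * (real (num_inf (\<rho>(l := \<not> \<rho> l))) - real (num_inf \<rho>)))"
      by (simp add: sum_negf[symmetric] algebra_simps)
    also have "\<dots> = - (tau * N_SI ?f E \<rho> - gam * real (num_inf \<rho>))"
      by (simp only: inner_I)
    finally show ?thesis .
  qed
  have dS: "((\<lambda>s. \<Sum>\<sigma>\<in>UNIV. real (CARD('v) - num_inf \<sigma>) * X \<sigma> s) has_real_derivative
     (\<Sum>\<rho>\<in>UNIV. X \<rho> t * (- (tau * N_SI ?f E \<rho> - gam * real (num_inf \<rho>))))) (at t within {0..})"
    using gen_deriv[where g="\<lambda>\<sigma>. real (CARD('v) - num_inf \<sigma>)", OF master[OF t]] by (simp only: inS)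
  have v1: "(\<Sum>\<rho>\<in>UNIV. X \<rho> t * (tau * N_SI ?f E \<rho> - gam * real (num_inf \<rho>)))
      = tau * (\<Sum>\<sigma>\<in>UNIV. N_SI ?f E \<sigma> * X \<sigma> t) - gam * (\<Sum>\<sigma>\<in>UNIV. real (num_inf \<sigma>) * X \<sigma> t)"
    by (simp add: sum_subtractf sum_distrib_left algebra_simps)
  have v2: "(\<Sum>\<rho>\<in>UNIV. X \<rho> t * (- (tau * N_SI ?f E \<rho> - gam * real (num_inf \<rho>))))
      = gam * (\<Sum>\<sigma>\<in>UNIV. real (num_inf \<sigma>) * X \<sigma> t) - tau * (\<Sum>\<sigma>\<in>UNIV. N_SI ?f E \<sigma> * X \<sigma> t)"
    by (simp add: sum_subtractf sum_distrib_left algebra_simps)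
  show "let Sm = (\<lambda>s. \<Sum>\<sigma>\<in>UNIV. real (CARD('v) - num_inf \<sigma>) * X \<sigma> s);
          Im = (\<lambda>s. \<Sum>\<sigma>\<in>UNIV. real (num_inf \<sigma>) * X \<sigma> s);
          SIm = (\<lambda>s. \<Sum>\<sigma>\<in>UNIV. N_SI (f_sat c) E \<sigma> * X \<sigma> s)
      in (Sm has_real_derivative (gam * Im t - tau * SIm t)) (at t within {0..})
       \<and> (Im has_real_derivative (tau * SIm t - gam * Im t)) (at t within {0..})"
    using dI dS unfolding v1 v2 Let_def by simp
qed

end
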